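(* For any fixed $\lambda > 0$ there exists $p_0(\lambda)$ such that for all primes $p \ge p_0(\lambda)$, \[ \alpha_p(\lambda) := \operatorname{Cov}_{\mu^{(p)}_\lambda}\bigl(g_p(x),\, x^2\bigr) > 0, \] where $\mu^{(p)}_\lambda$ is the probability measure on $[-1,1]$ with $\mu^{(p)}_\lambda(dx) \propto \sqrt{1-x^2}\,(1 - 2x/\sqrt{p} + 1/p)^{-\lambda}\,dx$ and $g_p(x) = -\log(1 - 2x/\sqrt{p} + 1/p)$. *)

theory Defs
  imports "HOL-Analysis.Analysis" "HOL-Computational_Algebra.Primes"
begin

definition base_p :: "nat \<Rightarrow> real \<Rightarrow> real" where
  "base_p p x = 1 - 2 * x / sqrt (real p) + 1 / real p"

definition mu_weight :: "real \<Rightarrow> nat \<Rightarrow> real \<Rightarrow> real" where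
  "mu_weight lam p x = sqrt (1 - x^2) * (base_p p x) powr (- lam)"

definition g_p :: "nat \<Rightarrow> real \<Rightarrow> real" where
  "g_p p x = - ln (base_p p x)"

definition mu_expect :: "real \<Rightarrow> nat \<Rightarrow> (real \<Rightarrow> real) \<Rightarrow> real" where
  "mu_expect lam p f =
     integral {-1..1} (\<lambda>x. f x * mu_weight lam p x) / integral {-1..1} (mu_weight lam p)"

definition alpha_p :: "real \<Rightarrow> nat \<Rightarrow> real" where
  "alpha_p lam p = mu_expect lam p (\<lambda>x. g_p p x * x^2)
                   - mu_expect lam p (g_p p) * mu_expect lam p (\<lambda>x. x^2)"

end

theory Submission
  imports Defs
begin

definition bb :: "real \<Rightarrow> real \<Rightarrow> real" where "bb e x = 1 - 2*x*e + e^2"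
definition gg :: "real \<Rightarrow> real \<Rightarrow> real" where "gg e x = - ln (bb e x)"
definition ww :: "real \<Rightarrow> real \<Rightarrow> real \<Rightarrow> real" where
  "ww lam e x = sqrt (1 - x^2) * exp (lam * gg e x)"
definition GG :: "real \<Rightarrow> real \<Rightarrow> real \<Rightarrow> real" where
  "GG lam e x = (gg e x * exp (lam * gg e x) + gg e (-x) * exp (lam * gg e (-x)))
     / (exp (lam * gg e x) + exp (lam * gg e (-x)))"

lemma bb_pos: assumes "0 < e" "e < 1" "x \<le> 1" shows "bb e x > 0"
proof -
  have "bb e x = (1-e)^2 + 2*e*(1-x)" by (simp add: bb_def power2_eq_square algebra_simps)
  moreover have "(1-e)^2 > 0" using assms by simp
  moreover have "2*e*(1-x) \<ge> 0" using assms by simp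
  ultimately show ?thesis by linarith
qed

lemma gg_less: assumes "0 < e" "e < 1" "x < y" "y \<le> 1" shows "gg e x < gg e y"
proof -
  have py: "bb e y > 0" using assms bb_pos by auto
  have "bb e x - bb e y = 2*e*(y-x)" by (simp add: bb_def algebra_simps)
  moreover have "2*e*(y-x) > 0" using assms by simp
  ultimately have "bb e y < bb e x" by linarith
  then have "ln (bb e y) < ln (bb e x)" using py by simp
  then show ?thesis by (simp add: gg_def)
qed

lemma gg_le: assumes "0 < e" "e < 1" "x \<le> y" "y \<le> 1" shows "gg e x \<le> gg e y"
  using gg_less[OF assms(1,2) _ assms(4), of x] assms(3) by (cases "x = y") auto

lemma gg_sum: assumes "0 < e" "e < 1" "\<bar>x\<bar> \<le> 1"
  shows "gg e x + gg e (-x) = - ln ((1+e^2)^2 - 4*e^2*x^2)"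
proof -
  have p1: "bb e x > 0" "bb e (-x) > 0" using assms bb_pos by auto
  have "bb e x * bb e (-x) = (1+e^2)^2 - 4*e^2*x^2"
    by (simp add: bb_def power2_eq_square algebra_simps)
  moreover have "ln (bb e x * bb e (-x)) = ln (bb e x) + ln (bb e (-x))" using p1 by (simp add: ln_mult)
  ultimately show ?thesis by (simp add: gg_def)
qed

lemma sigma_less: assumes "0 < e" "e < 1" "0 \<le> s" "s < t" "t \<le> 1"
  shows "gg e s + gg e (-s) < gg e t + gg e (-t)"
proof -
  have pt: "(1+e^2)^2 - 4 * e^2 * t^2 > 0"
  proof -
    have "bb e t * bb e (-t) > 0" using assms bb_pos by auto
    moreover have "bb e t * bb e (-t) = (1+e^2)^2 - 4 * e^2 * t^2"
      by (simp add: bb_def power2_eq_square algebra_simps)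
    ultimately show ?thesis by simp
  qed
  have "s^2 < t^2" using assms by (simp add: power_strict_mono)
  then have "4 * e^2 * s^2 < 4 * e^2 * t^2" using assms by simp
  then have "(1+e^2)^2 - 4 * e^2 * t^2 < (1+e^2)^2 - 4 * e^2 * s^2" by linarith
  then have "ln ((1+e^2)^2 - 4 * e^2 * t^2) < ln ((1+e^2)^2 - 4 * e^2 * s^2)" using pt by simp
  then show ?thesis using gg_sum[OF assms(1,2), of s] gg_sum[OF assms(1,2), of t] assms by simp
qed

lemma GG_alt: "GG lam e x = (gg e x + gg e (-x))/2
   + (gg e x - gg e (-x))/2 * tanh (lam * ((gg e x - gg e (-x))/2))"
proof -
  define A where "A = gg e x"
  define B where "B = gg e (-x)"
  define y where "y = lam * ((A - B)/2)"
  define m where "m = exp (lam * ((A+B)/2))"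
  have m0: "m > 0" by (simp add: m_def)
  have "lam * A = lam * ((A+B)/2) + y" by (simp add: y_def field_simps)
  then have ea: "exp (lam * A) = m * exp y" unfolding m_def by (simp add: exp_add[symmetric])
  have "lam * B = lam * ((A+B)/2) + (-y)" by (simp add: y_def field_simps)
  then have eb: "exp (lam * B) = m * exp (-y)" unfolding m_def by (simp add: exp_add[symmetric])
  have s0: "exp y + exp (-y) > 0" by (simp add: add_pos_pos)
  have "GG lam e x = (A * (m * exp y) + B * (m * exp (-y))) / (m * exp y + m * exp (-y))"
    unfolding GG_def A_def[symmetric] B_def[symmetric] ea eb by simp
  also have "\<dots> = (m * (A * exp y + B * exp (-y))) / (m * (exp y + exp (-y)))"
    by (simp add: algebra_simps)
  also have "\<dots> = (A * exp y + B * exp (-y)) / (exp y + exp (-y))"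
    using m0 by simp
  also have "\<dots> = (A+B)/2 + (A-B)/2 * ((exp y - exp (-y)) / (exp y + exp (-y)))"
    using s0 by (simp add: field_simps)
  also have "\<dots> = (A+B)/2 + (A-B)/2 * tanh y" by (simp add: tanh_altdef)
  finally show ?thesis unfolding y_def A_def B_def .
qed

lemma GG_less: assumes "0 < e" "e < 1" "lam > 0" "0 \<le> s" "s < t" "t \<le> 1"
  shows "GG lam e s < GG lam e t"
proof -
  define ds where "ds = (gg e s - gg e (-s))/2"
  define dt where "dt = (gg e t - gg e (-t))/2"
  have ds0: "ds \<ge> 0" unfolding ds_def using gg_le[OF assms(1,2), of "-s" s] assms by simp
  have "gg e s < gg e t" using gg_less[OF assms(1,2)] assms by simp
  moreover have "gg e (-t) < gg e (-s)" using gg_less[OF assms(1,2)] assms by simp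
  ultimately have dle: "ds \<le> dt" unfolding ds_def dt_def by simp
  have "tanh (lam * ds) \<le> tanh (lam * dt)" using dle assms by (simp add: mult_left_mono)
  moreover have "0 \<le> tanh (lam * ds)" using ds0 assms by simp
  ultimately have "ds * tanh (lam * ds) \<le> dt * tanh (lam * dt)"
    using dle ds0 by (intro mult_mono) auto
  moreover have "(gg e s + gg e (-s))/2 < (gg e t + gg e (-t))/2"
    using sigma_less[OF assms(1,2,4,5,6)] by simp
  ultimately show ?thesis using GG_alt[of lam e s] GG_alt[of lam e t]
    unfolding ds_def[symmetric] dt_def[symmetric] by linarith
qed

lemma GG_even: "GG lam e (-x) = GG lam e x"
  unfolding GG_def by (simp add: algebra_simps)

lemma cont_gg: assumes "0 < e" "e < 1"
  shows "continuous_on {-1..1} (\<lambda>x. gg e x)" "continuous_on {-1..1} (\<lambda>x. gg e (-x))"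
proof -
  have "\<forall>x\<in>{-1..1}. 1 - 2*x*e + e^2 \<noteq> 0"
    using bb_pos[OF assms] unfolding bb_def by (metis atLeastAtMost_iff less_irrefl)
  then show "continuous_on {-1..1} (\<lambda>x. gg e x)" unfolding gg_def bb_def
    by (intro continuous_intros) auto
  have "\<forall>x\<in>{-1..1}. 1 - 2*(-x)*e + e^2 \<noteq> 0"
    using bb_pos[OF assms] unfolding bb_def
    by (metis atLeastAtMost_iff less_irrefl minus_le_iff)
  then show "continuous_on {-1..1} (\<lambda>x. gg e (-x))" unfolding gg_def bb_def
    by (intro continuous_intros) auto
qed

lemma main:
  assumes e0: "0 < e" and e1: "e < 1" and l0: "lam > 0"
  shows "integral {-1..1} (\<lambda>x. gg e x * x^2 * ww lam e x) / integral {-1..1} (ww lam e)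
     - integral {-1..1} (\<lambda>x. gg e x * ww lam e x) / integral {-1..1} (ww lam e)
       * (integral {-1..1} (\<lambda>x. x^2 * ww lam e x) / integral {-1..1} (ww lam e)) > 0"
proof -
  note cg = cont_gg[OF e0 e1]
  have cw: "continuous_on {-1..1} (\<lambda>x. ww lam e x)" unfolding ww_def
    by (intro continuous_intros cg)
  have cwm: "continuous_on {-1..1} (\<lambda>x. ww lam e (-x))" unfolding ww_def
    by (intro continuous_intros cg)
  have w0: "ww lam e x \<ge> 0" if "x \<in> {-1..1}" for x
  proof -
    have "x^2 \<le> 1" using that by (simp add: abs_square_le_1 abs_le_iff)
    then show ?thesis unfolding ww_def by simp
  qed
  define Z where "Z = integral {-1..1} (ww lam e)"
  have Zpos: "Z > 0"
  proof -
    have "Z \<ge> 0" unfolding Z_def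
      by (rule integral_nonneg) (use integrable_continuous_interval[OF cw] w0 in auto)
    moreover have "Z \<noteq> 0"
    proof
      assume "Z = 0"
      then have "((\<lambda>x. ww lam e x) has_integral 0) (cbox (-1) 1)"
        using integrable_continuous_interval[OF cw] unfolding Z_def
        by (metis cbox_interval has_integral_integral)
      then have "ww lam e 0 = 0"
        by (intro has_integral_0_cbox_imp_0[of "-1" 1 "\<lambda>x. ww lam e x"])
           (use cw w0 in \<open>auto simp: cbox_interval box_real\<close>)
      moreover have "ww lam e 0 > 0" unfolding ww_def by simp
      ultimately show False by simp
    qed
    ultimately show ?thesis by simp
  qed
  define B where "B = integral {-1..1} (\<lambda>x. gg e x * ww lam e x)"
  define C where "C = integral {-1..1} (\<lambda>x. x^2 * ww lam e x)"
  define A where "A = integral {-1..1} (\<lambda>x. gg e x * x^2 * ww lam e x)"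
  define E where "E = B / Z"
  have int1: "(\<lambda>x. gg e x * ww lam e x) integrable_on {-1..1}"
    by (rule integrable_continuous_interval) (intro continuous_intros cw cg)
  have int2: "(\<lambda>x. x^2 * ww lam e x) integrable_on {-1..1}"
    by (rule integrable_continuous_interval) (intro continuous_intros cw cg)
  have int3: "(\<lambda>x. gg e x * x^2 * ww lam e x) integrable_on {-1..1}"
    by (rule integrable_continuous_interval) (intro continuous_intros cw cg)
  have int0: "(\<lambda>x. ww lam e x) integrable_on {-1..1}"
    by (rule integrable_continuous_interval) (intro continuous_intros cw cg)
  define \<phi> where "\<phi> x = gg e x * ww lam e x - E * ww lam e x" for x
  have Iphi: "integral {-1..1} \<phi> = 0"
  proof -
    have "integral {-1..1} \<phi> = B - E * Z"
      unfolding \<phi>_def B_def Z_def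
      by (subst integral_diff) (use int1 int0 in \<open>auto intro: integrable_on_mult_right\<close>)
    then show ?thesis using Zpos by (simp add: E_def)
  qed
  have intphi: "\<phi> integrable_on {-1..1}" unfolding \<phi>_def
    by (rule integrable_continuous_interval) (intro continuous_intros cw cg)
  define S where "S = {s\<in>{0..1}. GG lam e s \<ge> E}"
  define c where "c = (if S = {} then 1 else Inf S)"
  have key: "(GG lam e s - E) * (s^2 - c^2) \<ge> 0" if s: "s \<in> {0..1}" for s
  proof (cases "S = {}")
    case True
    then have "GG lam e s < E" using s unfolding S_def by auto
    moreover have "s^2 \<le> 1" using s by (simp add: abs_square_le_1 abs_le_iff)
    ultimately show ?thesis using True unfolding c_def by (intro mult_nonpos_nonpos) auto
  next
    case False
    have bdd: "bdd_below S" unfolding S_def by (rule bdd_belowI[of _ 0]) auto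
    have c0: "c \<ge> 0" unfolding c_def using False
      by (auto intro!: cInf_greatest simp: S_def)
    show ?thesis
    proof (cases "GG lam e s \<ge> E")
      case True
      then have "s \<in> S" using s unfolding S_def by auto
      then have "c \<le> s" unfolding c_def using False bdd by (auto intro: cInf_lower)
      then have "c^2 \<le> s^2" using c0 by (simp add: power_mono)
      then show ?thesis using True by simp
    next
      case lt: False
      have "s \<le> c"
      proof (rule ccontr)
        assume "\<not> s \<le> c"
        then have "Inf S < s" using False unfolding c_def by simp
        then obtain x where x: "x \<in> S" "x < s" using cInf_less_iff[OF False bdd] by auto
        then have "GG lam e x < GG lam e s"
          using GG_less[OF e0 e1 l0] s unfolding S_def by auto
        then show False using x lt unfolding S_def by auto
      qed
      then have "s^2 \<le> c^2" using s by (simp add: power_mono)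
      then show ?thesis using lt by (intro mult_nonpos_nonpos) auto
    qed
  qed
  have key2: "(GG lam e x - E) * (x^2 - c^2) \<ge> 0" if x: "x \<in> {-1..1}" for x
  proof -
    have "GG lam e x = GG lam e \<bar>x\<bar>" by (cases "x \<ge> 0") (auto simp: GG_even)
    moreover have "x^2 = \<bar>x\<bar>^2" by simp
    ultimately show ?thesis using key[of "\<bar>x\<bar>"] x by auto
  qed
  define h where "h x = \<phi> x * (x^2 - c^2)" for x
  have ch: "continuous_on {-1..1} h" unfolding h_def \<phi>_def
    by (intro continuous_intros cw cg)
  have chm: "continuous_on {-1..1} (\<lambda>x. h (-x))" unfolding h_def \<phi>_def
    by (intro continuous_intros cwm cg)
  have Ih: "integral {-1..1} h = A - E * C"
  proof -
    have "h = (\<lambda>x. (gg e x * x^2 * ww lam e x - E * (x^2 * ww lam e x)) - c^2 * \<phi> x)"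
      unfolding h_def \<phi>_def by (auto simp: algebra_simps)
    then have "integral {-1..1} h = integral {-1..1} (\<lambda>x. gg e x * x^2 * ww lam e x - E * (x^2 * ww lam e x)) - c^2 * integral {-1..1} \<phi>"
      by (simp add: integral_diff integrable_diff int3 int2 intphi integrable_on_mult_right)
    also have "\<dots> = A - E * C" unfolding A_def C_def using Iphi
      by (simp add: integral_diff int3 int2 integrable_on_mult_right)
    finally show ?thesis .
  qed
  define k where "k x = h x + h (-x)" for x
  have ck: "continuous_on {-1..1} k" unfolding k_def by (intro continuous_intros ch chm)
  have Ik: "integral {-1..1} k = 2 * integral {-1..1} h"
  proof -
    have "integral {-1..1} (\<lambda>x. h (-x)) = integral {-1..1} h"
      using Henstock_Kurzweil_Integration.integral_reflect_real[of 1 "-1" h] by simp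
    then show ?thesis unfolding k_def
      using integrable_continuous_interval[OF ch] integrable_continuous_interval[OF chm]
      by (simp add: integral_add)
  qed
  have kform: "k x = sqrt (1 - x^2) * (exp (lam * gg e x) + exp (lam * gg e (-x)))
      * ((GG lam e x - E) * (x^2 - c^2))" for x
  proof -
    have pos: "exp (lam * gg e x) + exp (lam * gg e (-x)) > 0" by (simp add: add_pos_pos)
    show ?thesis unfolding k_def h_def \<phi>_def ww_def GG_def using pos
      by (simp add: field_simps)
  qed
  have k0: "k x \<ge> 0" if "x \<in> {-1..1}" for x
  proof -
    have "x^2 \<le> 1" using that by (simp add: abs_square_le_1 abs_le_iff)
    then show ?thesis unfolding kform using key2[OF that]
      by (intro mult_nonneg_nonneg[OF mult_nonneg_nonneg]) (auto intro: add_nonneg_nonneg)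
  qed
  have "integral {-1..1} k > 0"
  proof -
    have "integral {-1..1} k \<ge> 0"
      by (rule integral_nonneg) (use integrable_continuous_interval[OF ck] k0 in auto)
    moreover have "integral {-1..1} k \<noteq> 0"
    proof
      assume "integral {-1..1} k = 0"
      then have hi: "(k has_integral 0) (cbox (-1) 1)"
        using integrable_continuous_interval[OF ck]
        by (metis cbox_interval has_integral_integral)
      have z: "(GG lam e x - E) * (x^2 - c^2) = 0" if "x \<in> {0, 1/4, 1/2}" for x :: real
      proof -
        have "k x = 0"
          by (rule has_integral_0_cbox_imp_0[of "-1" 1 k])
             (use ck k0 hi that in \<open>auto simp: cbox_interval box_real\<close>)
        moreover have "x^2 < 1"
        proof -
          have "x = 0 \<or> x = 1/4 \<or> x = 1/2" using that by auto
          then show ?thesis by (elim disjE; hypsubst; simp add: power2_eq_square)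
        qed
        then have "sqrt (1 - x^2) > 0" by simp
        moreover have "exp (lam * gg e x) + exp (lam * gg e (-x)) > 0" by (simp add: add_pos_pos)
        ultimately show ?thesis unfolding kform by simp
      qed
      have g1: "GG lam e 0 < GG lam e (1/4)" "GG lam e (1/4) < GG lam e (1/2)"
        using GG_less[OF e0 e1 l0] by auto
      have z1: "(GG lam e 0 - E) * (0 - c^2) = 0" using z[of 0] by simp
      have z2: "(GG lam e (1/4) - E) * (1/16 - c^2) = 0" using z[of "1/4"] by (simp add: power2_eq_square)
      have z3: "(GG lam e (1/2) - E) * (1/4 - c^2) = 0" using z[of "1/2"] by (simp add: power2_eq_square)
      show False
      proof (cases "c^2 = 0")
        case True then show ?thesis using z2 z3 g1 by auto
      next
        case c: False
        show ?thesis
        proof (cases "c^2 = 1/16")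
          case True then show ?thesis using z1 z3 g1 by auto
        next
          case False then show ?thesis using z1 z2 g1 c by auto
        qed
      qed
    qed
    ultimately show ?thesis by simp
  qed
  then have "A - E * C > 0" using Ik Ih by simp
  then have "(A - E * C) / Z > 0" using Zpos by simp
  moreover have "(A - E * C) / Z = A / Z - B / Z * (C / Z)" unfolding E_def using Zpos
    by (simp add: field_simps)
  ultimately show ?thesis unfolding A_def B_def C_def Z_def by simp
qed

theorem theoremA4:
  fixes lam :: real
  assumes "lam > 0"
  shows "\<exists>p0::nat. \<forall>p::nat. prime p \<and> p \<ge> p0 \<longrightarrow> alpha_p lam p > 0"
proof (intro exI[of _ 2] allI impI)
  fix p :: nat
  assume "prime p \<and> 2 \<le> p"
  then have p2: "real p \<ge> 2" by simp
  define e where "e = 1 / sqrt (real p)"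
  have sp: "sqrt (real p) > 1" using p2 by simp
  have e0: "e > 0" and e1: "e < 1" unfolding e_def using sp by auto
  have e2: "e^2 = 1 / real p" unfolding e_def using p2 by (simp add: power_divide)
  have base: "base_p p x = bb e x" for x
    unfolding base_p_def bb_def e2 by (simp add: e_def)
  have gp: "g_p p x = gg e x" for x unfolding g_p_def gg_def base by simp
  have mw: "mu_weight lam p x = ww lam e x" if "x \<in> {-1..1}" for x
  proof -
    have "bb e x > 0" using bb_pos[OF e0 e1] that by simp
    then show ?thesis unfolding mu_weight_def ww_def base gg_def powr_def by simp
  qed
  have i1: "integral {-1..1} (mu_weight lam p) = integral {-1..1} (ww lam e)"
    by (rule integral_cong) (simp add: mw)
  have i2: "integral {-1..1} (\<lambda>x. g_p p x * x^2 * mu_weight lam p x)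
      = integral {-1..1} (\<lambda>x. gg e x * x^2 * ww lam e x)"
    by (rule integral_cong) (simp add: mw gp)
  have i3: "integral {-1..1} (\<lambda>x. g_p p x * mu_weight lam p x)
      = integral {-1..1} (\<lambda>x. gg e x * ww lam e x)"
    by (rule integral_cong) (simp add: mw gp)
  have i4: "integral {-1..1} (\<lambda>x. x^2 * mu_weight lam p x)
      = integral {-1..1} (\<lambda>x. x^2 * ww lam e x)"
    by (rule integral_cong) (simp add: mw)
  show "alpha_p lam p > 0"
    unfolding alpha_p_def mu_expect_def i1 i2 i3 i4
    using main[OF e0 e1 assms] by simp
qed

end
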